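(* Let $(X,f)$ be a dynamical system and $\mathbf{a}=(a_1,\dots,a_r)\in\mathbb{N}^r_*$. The following are equivalent: (1) $(X,f)$ is multi-minimal with respect to $\mathbf{a}$, i.e. $(X^r,f^{a_1}\times\dots\times f^{a_r})$ is minimal; (2) $(X,f)$ is $\mathcal{F}_s[\mathbf{a}]$-point transitive; (3) $Trans_{\mathcal{F}_s[\mathbf{a}]}(X,f)=X$. Consequently (taking all $\mathbf{a}=(1,2,\dots,i)$), the following are also equivalent: (1') $(X,f)$ is multi-minimal; (2') $(X,f)$ is $\mathcal{F}_s[\infty]$-point transitive; (3') $Trans_{\mathcal{F}_s[\infty]}(X,f)=X$.
   Context: A dynamical system is a pair $(X,f)$ with $X$ a compact metric space and $f:X\to X$ continuous. $\mathbb{N}=\{1,2,\dots\}$, $\mathbb{Z}_+=\{0,1,2,\dots\}$, $\mathbb{N}^r_*=\{(n_1,\dots,n_r)\in\mathbb{N}^r: n_1<\dots<n_r\}$. A system is minimal if it has no proper non-empty closed invariant subset; $(X,f)$ is multi-minimal if $(X^n,f\times f^2\times\dots\times f^n)$ is minimal for every $n\in\mathbb{N}$. $N(x,U)=\{n\in\mathbb{N}: f^n(x)\in U\}$. For a family $\mathcal{F}$ of subsets of $\mathbb{N}$, $x$ is an $\mathcal{F}$-transitive point if $N(x,U)\in\mathcal{F}$ for every non-empty open $U\subset X$; $Trans_{\mathcal{F}}(X,f)$ is the set of such points, and $(X,f)$ is $\mathcal{F}$-point transitive if it is non-empty. A set $F\subset\mathbb{N}$ is syndetic if there is $N$ with $\{n,\dots,n+N\}\cap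 F\ne\emptyset$ for all $n\in\mathbb{N}$. For $\mathbf{a}\in\mathbb{N}^r$, $\mathcal{F}_s[\mathbf{a}]$ is the collection of $F\subset\mathbb{N}$ such that for every $n_1,\dots,n_r\in\mathbb{Z}_+$ there is a syndetic set $F'\subset\mathbb{N}$ with $a_iF'+n_i=\{a_im+n_i:m\in F'\}\subset F$ for all $i=1,\dots,r$. $\mathcal{F}_s[\infty]=\bigcap_{i=1}^\infty\mathcal{F}_s[(1,2,\dots,i)]$. *)

theory Defs
  imports "HOL-Analysis.Analysis"
begin

definition minimal_sys :: "'b topology \<Rightarrow> ('b \<Rightarrow> 'b) \<Rightarrow> bool" where
  "minimal_sys T g \<longleftrightarrow> g ` topspace T \<subseteq> topspace T \<and>
     (\<forall>A. closedin T A \<and> A \<noteq> {} \<and> g ` A \<subseteq> A \<longrightarrow> A = topspace T)"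

text \<open>Elements of N^r_*: strictly increasing lists of positive naturals, r = length.\<close>
definition admissible_vec :: "nat list \<Rightarrow> bool" where
  "admissible_vec a \<longleftrightarrow> length a \<ge> 1 \<and> sorted_wrt (<) a \<and> (\<forall>i<length a. a ! i \<ge> 1)"

definition prod_space :: "'a::topological_space set \<Rightarrow> nat \<Rightarrow> (nat \<Rightarrow> 'a) topology" where
  "prod_space X r = product_topology (\<lambda>_. top_of_set X) {..<r}"

definition prod_map :: "('a \<Rightarrow> 'a) \<Rightarrow> nat list \<Rightarrow> (nat \<Rightarrow> 'a) \<Rightarrow> (nat \<Rightarrow> 'a)" where
  "prod_map f a x = restrict (\<lambda>i. (f ^^ (a ! i)) (x i)) {..<length a}"

definition multi_minimal_wrt :: "'a::topological_space set \<Rightarrow> ('a \<Rightarrow> 'a) \<Rightarrow> nat list \<Rightarrow> bool" where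
  "multi_minimal_wrt X f a \<longleftrightarrow> minimal_sys (prod_space X (length a)) (prod_map f a)"

definition multi_minimal :: "'a::topological_space set \<Rightarrow> ('a \<Rightarrow> 'a) \<Rightarrow> bool" where
  "multi_minimal X f \<longleftrightarrow> (\<forall>n\<ge>1. multi_minimal_wrt X f [1..<n+1])"

text \<open>Subsets of N = {1,2,...} are represented as nat sets.\<close>
definition syndetic :: "nat set \<Rightarrow> bool" where
  "syndetic F \<longleftrightarrow> (\<exists>N. \<forall>n\<ge>1. \<exists>m\<in>F. n \<le> m \<and> m \<le> n + N)"

definition Fs :: "nat list \<Rightarrow> nat set \<Rightarrow> bool" where
  "Fs a F \<longleftrightarrow> (\<forall>ns. length ns = length a \<longrightarrow>
      (\<exists>F'. 0 \<notin> F' \<and> syndetic F' \<and> (\<forall>i<length a. \<forall>m\<in>F'. a ! i * m + ns ! i \<in> F)))"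

definition Fs_inf :: "nat set \<Rightarrow> bool" where
  "Fs_inf F \<longleftrightarrow> (\<forall>i\<ge>1. Fs [1..<i+1] F)"

definition hit_times :: "('a \<Rightarrow> 'a) \<Rightarrow> 'a \<Rightarrow> 'a set \<Rightarrow> nat set" where
  "hit_times f x U = {n. n \<ge> 1 \<and> (f ^^ n) x \<in> U}"

definition Trans_F :: "'a::topological_space set \<Rightarrow> ('a \<Rightarrow> 'a) \<Rightarrow> (nat set \<Rightarrow> bool) \<Rightarrow> 'a set" where
  "Trans_F X f Fam = {x \<in> X. \<forall>U. openin (top_of_set X) U \<and> U \<noteq> {} \<longrightarrow> Fam (hit_times f x U)}"

end

theory Submission
  imports Defs
begin


lemma cm_funpow: "continuous_map T T g \<Longrightarrow> continuous_map T T (g^^n)"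
proof (induction n)
  case 0 then show ?case by simp
next
  case (Suc n) then show ?case using continuous_map_compose[OF Suc.IH Suc.prems] by (simp only: funpow.simps(2))
qed

lemma funpow_in: "continuous_map T T g \<Longrightarrow> y \<in> topspace T \<Longrightarrow> (g^^n) y \<in> topspace T"
proof -
  assume a: "continuous_map T T g" "y \<in> topspace T"
  have "(g^^n) \<in> topspace T \<rightarrow> topspace T" using cm_funpow[OF a(1), of n] by (simp add: continuous_map_def)
  then show ?thesis using a(2) by (rule funcset_mem)
qed

lemma funpow_inv: "g ` A \<subseteq> A \<Longrightarrow> a \<in> A \<Longrightarrow> (g^^n) a \<in> A"
proof (induction n)
  case 0 then show ?case by simp
next
  case (Suc n) then show ?case by (simp add: image_subset_iff)
qed

lemma UR:
  assumes reg: "regular_space T" and cm: "continuous_map T T g"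
    and ur: "\<And>V. openin T V \<Longrightarrow> y \<in> V \<Longrightarrow> \<exists>L. \<forall>k. \<exists>l\<le>L. (g^^(k+l)) y \<in> V"
    and a: "a \<in> T closure_of {(g^^k) y | k. True}"
    and A: "closedin T A" "g ` A \<subseteq> A" "a \<in> A"
    and y: "y \<in> topspace T"
  shows "y \<in> A"
proof (rule ccontr)
  assume "y \<notin> A"
  then obtain W where W: "openin T W" "y \<in> W" "disjnt A (T closure_of W)"
    using reg A(1) y unfolding regular_space by blast
  obtain L where L: "\<forall>k. \<exists>l\<le>L. (g^^(k+l)) y \<in> W" using ur W by blast
  define Op where "Op = topspace T - T closure_of W"
  have "openin T Op" unfolding Op_def by (simp add: openin_diff)
  define K where "K = (\<Inter>l\<in>{..L}. {p \<in> topspace T. (g^^l) p \<in> Op})"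
  have oK: "openin T K" unfolding K_def
    by (rule openin_INT2) (auto intro: openin_continuous_map_preimage cm_funpow[OF cm] \<open>openin T Op\<close>)
  have aT: "a \<in> topspace T" using A(1) A(3) closedin_subset by blast
  have "a \<in> K" unfolding K_def Op_def using funpow_inv[OF A(2) A(3)] W(3) funpow_in[OF cm aT] aT
    by (auto simp: disjnt_iff)
  then obtain z where z: "z \<in> {(g^^k) y | k. True}" "z \<in> K" using a oK unfolding in_closure_of by blast
  then obtain k where k: "z = (g^^k) y" by blast
  obtain l where l: "l \<le> L" "(g^^(k+l)) y \<in> W" using L by blast
  have f1: "(g^^l) z \<in> Op" using z(2) l(1) unfolding K_def INT_iff atMost_iff mem_Collect_eq by blast
  have f2: "(g^^l) z = (g^^(k+l)) y" 
  proof -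
    have e: "(g^^(k+l)) y = (g^^l) ((g^^k) y)" unfolding add.commute[of k l] by (simp only: funpow_add comp_apply)
    show ?thesis by (simp only: k e)
  qed
  have "W \<subseteq> T closure_of W" using closure_of_subset[OF openin_subset[OF W(1)]] .
  then have "(g^^l) z \<in> T closure_of W" using l(2) f2 by (simp add: subset_iff)
  then show False using f1 unfolding Op_def by simp
qed

lemma orbit_inv:
  assumes "\<And>k. Q k \<Longrightarrow> Q (Suc k)"
  shows "g ` {(g^^k) p | k. Q k} \<subseteq> {(g^^k) p | k. Q k}"
proof
  fix x assume "x \<in> g ` {(g^^k) p | k. Q k}"
  then obtain k where k: "Q k" "x = g ((g^^k) p)" by blast
  have "x = (g^^(Suc k)) p" using k(2) by simp
  moreover have "Q (Suc k)" using assms k(1) .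
  ultimately show "x \<in> {(g^^k) p | k. Q k}" by blast
qed

lemma orbit_closure_inv:
  assumes cm: "continuous_map T T g" and "\<And>k. Q k \<Longrightarrow> Q (Suc k)"
  shows "g ` (T closure_of {(g^^k) p | k. Q k}) \<subseteq> T closure_of {(g^^k) p | k. Q k}"
proof -
  have "g ` (T closure_of {(g^^k) p | k. Q k}) \<subseteq> T closure_of (g ` {(g^^k) p | k. Q k})"
    by (rule continuous_map_image_closure_subset[OF cm])
  also have "\<dots> \<subseteq> T closure_of {(g^^k) p | k. Q k}"
    by (rule closure_of_mono[OF orbit_inv]) (rule assms(2))
  finally show ?thesis .
qed

lemma MinSynd:
  assumes cs: "compact_space T" and cm: "continuous_map T T g" and mn: "minimal_sys T g"
    and V: "openin T V" "V \<noteq> {}" and y: "y \<in> topspace T"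
  shows "\<exists>K. \<forall>n. \<exists>k. 1 \<le> k \<and> k \<le> K \<and> (g^^(n+k)) y \<in> V"
proof -
  have hit: "\<exists>k\<ge>1. (g^^k) p \<in> V" if p: "p \<in> topspace T" for p
  proof -
    define C where "C = T closure_of {(g^^k) p | k. k \<ge> 1}"
    have "g ` C \<subseteq> C" unfolding C_def by (rule orbit_closure_inv[OF cm]) simp
    moreover have "C \<noteq> {}"
    proof -
      have "{(g^^k) p | k. k \<ge> 1} \<subseteq> topspace T" using funpow_in[OF cm p] by auto
      moreover have "(g^^1) p \<in> {(g^^k) p | k. k \<ge> 1}" by blast
      ultimately have "(g^^1) p \<in> C" unfolding C_def using closure_of_subset by blast
      then show ?thesis by blast
    qed
    ultimately have "C = topspace T" using mn unfolding minimal_sys_def C_def by auto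
    then obtain v where "v \<in> V" "v \<in> C" using V openin_subset by fastforce
    then obtain z where "z \<in> {(g^^k) p | k. k \<ge> 1}" "z \<in> V"
      using V(1) unfolding C_def in_closure_of by blast
    then show ?thesis by blast
  qed
  define U where "U = (\<lambda>k. {p \<in> topspace T. (g^^k) p \<in> V}) ` {1..}"
  have "\<forall>u\<in>U. openin T u" unfolding U_def
    by (auto intro: openin_continuous_map_preimage cm_funpow[OF cm] V(1))
  moreover have "topspace T \<subseteq> \<Union>U" unfolding U_def using hit by fastforce
  ultimately obtain F where F: "finite F" "F \<subseteq> U" "topspace T \<subseteq> \<Union>F"
    using cs unfolding compact_space_alt by meson
  then obtain I where I: "finite I" "I \<subseteq> {1..}" "F = (\<lambda>k. {p \<in> topspace T. (g^^k) p \<in> V}) ` I"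
    unfolding U_def by (meson finite_subset_image)
  define K where "K = Max (insert 0 I)"
  have "\<exists>k. 1 \<le> k \<and> k \<le> K \<and> (g^^(n+k)) y \<in> V" for n
  proof -
    have "(g^^n) y \<in> topspace T" using funpow_in[OF cm y] .
    then obtain k where "k \<in> I" "(g^^k) ((g^^n) y) \<in> V" using F(3) I(3) by auto
    moreover have "k \<le> K" unfolding K_def using I(1) \<open>k\<in>I\<close> by simp
    ultimately show ?thesis using I(2) by (intro exI[of _ k]) (auto simp: funpow_add add.commute)
  qed
  then show ?thesis by blast
qed



lemma cm_f:
  assumes "continuous_on X f" "f ` X \<subseteq> X"
  shows "continuous_map (top_of_set X) (top_of_set X) f"
  using assms by (simp add: continuous_map_in_subtopology image_subset_iff_funcset[symmetric])

lemma fX: "continuous_on X f \<Longrightarrow> f ` X \<subseteq> X \<Longrightarrow> y \<in> X \<Longrightarrow> (f^^n) y \<in> X"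
  using funpow_in[OF cm_f, of X f y n] by simp

lemma topspace_T: "topspace (prod_space X r) = PiE {..<r} (\<lambda>_. X)"
  unfolding prod_space_def by simp

lemma cm_g:
  assumes "continuous_on X f" "f ` X \<subseteq> X"
  shows "continuous_map (prod_space X (length a)) (prod_space X (length a)) (prod_map f a)"
  unfolding prod_space_def continuous_map_componentwise
proof (intro conjI ballI)
  show "prod_map f a ` topspace (product_topology (\<lambda>_. top_of_set X) {..<length a}) \<subseteq> extensional {..<length a}"
    unfolding prod_map_def by auto
  fix k assume k: "k \<in> {..<length a}"
  have e: "(\<lambda>x. prod_map f a x k) = (f^^(a!k)) \<circ> (\<lambda>x. x k)"
    using k unfolding prod_map_def by auto
  show "continuous_map (product_topology (\<lambda>_. top_of_set X) {..<length a}) (top_of_set X) (\<lambda>x. prod_map f a x k)"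
    unfolding e
    by (rule continuous_map_compose[OF continuous_map_product_projection[OF k] cm_funpow[OF cm_f[OF assms]]])
qed

lemma cs_T:
  assumes "compact X"
  shows "compact_space (prod_space X r)"
  unfolding prod_space_def compact_space_product_topology
  using assms compact_space_subtopology[of euclidean X] by simp

lemma reg_T: "regular_space (prod_space (X::'a::metric_space set) r)"
  unfolding prod_space_def regular_space_product_topology
  using regular_space_subtopology[OF regular_space_euclidean] by blast

lemma g_iter: "i < length a \<Longrightarrow> ((prod_map f a)^^m) x i = (f^^(a!i*m)) (x i)"
proof (induction m)
  case 0 then show ?case by simp
next
  case (Suc m)
  have "((prod_map f a)^^Suc m) x i = (f^^(a!i)) (((prod_map f a)^^m) x i)"
    using Suc.prems by (simp add: prod_map_def)
  also have "\<dots> = (f^^(a!i)) ((f^^(a!i*m)) (x i))" using Suc by simp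
  also have "\<dots> = (f^^(a!i + a!i*m)) (x i)" by (simp only: funpow_add comp_apply)
  also have "a!i + a!i*m = a!i * Suc m" by simp
  finally show ?case .
qed

lemma synd_ne: "syndetic F \<Longrightarrow> \<exists>m\<in>F. m \<ge> 1"
  unfolding syndetic_def by (meson order_refl order_trans)

lemma openin_T_box:
  assumes "openin (prod_space X r) V" "p \<in> V"
  obtains U where "\<And>i. i < r \<Longrightarrow> openin (top_of_set X) (U i)" "p \<in> PiE {..<r} U" "PiE {..<r} U \<subseteq> V"
  using assms unfolding prod_space_def openin_product_topology_alt
  by (metis lessThan_iff)


lemma box_open:
  assumes "\<And>i. i < r \<Longrightarrow> openin (top_of_set X) (U i)"
  shows "openin (prod_space X r) (PiE {..<r} U)"
  unfolding prod_space_def openin_PiE_gen using assms by auto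

lemma D13:
  assumes X: "compact X" "continuous_on X f" "f ` X \<subseteq> X"
    and ad: "admissible_vec a"
    and mm: "multi_minimal_wrt X f a"
    and x: "x \<in> X" and U: "openin (top_of_set X) U" "U \<noteq> {}"
  shows "Fs a (hit_times f x U)"
  unfolding Fs_def
proof (intro allI impI)
  fix ns :: "nat list" assume ns: "length ns = length a"
  define r where "r = length a"
  define T where "T = prod_space X r"
  define g where "g = prod_map f a"
  define y where "y = restrict (\<lambda>i. (f^^(ns!i)) x) {..<r}"
  have yT: "y \<in> topspace T" unfolding T_def topspace_T y_def using fX[OF X(2,3) x] by auto
  define V where "V = PiE {..<r} (\<lambda>_. U)"
  have oV: "openin T V" unfolding T_def V_def by (rule box_open) (rule U(1))
  have nV: "V \<noteq> {}" unfolding V_def using U(2) by (simp add: PiE_eq_empty_iff)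
  have cmg: "continuous_map T T g" unfolding T_def g_def r_def by (rule cm_g[OF X(2,3)])
  have csT: "compact_space T" unfolding T_def by (rule cs_T[OF X(1)])
  have mn: "minimal_sys T g" using mm unfolding multi_minimal_wrt_def T_def g_def r_def .
  obtain K where K: "\<forall>n. \<exists>k. 1 \<le> k \<and> k \<le> K \<and> (g^^(n+k)) y \<in> V"
    using MinSynd[OF csT cmg mn oV nV yT] by blast
  define F' where "F' = {m. m \<ge> 1 \<and> (g^^m) y \<in> V}"
  have "0 \<notin> F'" unfolding F'_def by simp
  moreover have "syndetic F'" unfolding syndetic_def
  proof (intro exI[of _ K] allI impI)
    fix n :: nat assume n: "n \<ge> 1"
    obtain k where k: "1 \<le> k" "k \<le> K" "(g^^(n - 1 + k)) y \<in> V" using K by blast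
    show "\<exists>m\<in>F'. n \<le> m \<and> m \<le> n + K"
      using k n unfolding F'_def by (intro bexI[of _ "n - 1 + k"]) auto
  qed
  moreover have "\<forall>i<length a. \<forall>m\<in>F'. a ! i * m + ns ! i \<in> hit_times f x U"
  proof (intro allI impI ballI)
    fix i m assume i: "i < length a" and m: "m \<in> F'"
    have "(g^^m) y i \<in> U" using m i unfolding F'_def V_def r_def by (auto simp: PiE_iff)
    moreover have "(g^^m) y i = (f^^(a!i*m)) ((f^^(ns!i)) x)"
      unfolding g_def g_iter[OF i, where f=f and m=m and x=y] using i unfolding y_def r_def by simp
    moreover have "(f^^(a!i*m)) ((f^^(ns!i)) x) = (f^^(a!i*m + ns!i)) x"
      by (simp only: funpow_add comp_apply)
    moreover have "a!i \<ge> 1" using ad i unfolding admissible_vec_def by blast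
    moreover have "m \<ge> 1" using m unfolding F'_def by simp
    ultimately show "a ! i * m + ns ! i \<in> hit_times f x U"
      unfolding hit_times_def by (simp add: Suc_le_eq)
  qed
  ultimately show "\<exists>F'. 0 \<notin> F' \<and> syndetic F' \<and> (\<forall>i<length a. \<forall>m\<in>F'. a ! i * m + ns ! i \<in> hit_times f x U)"
    by blast
qed


lemma w_iter:
  assumes i: "i < length a"
  shows "((prod_map f a)^^m) (restrict (\<lambda>i. (f^^(ns i)) x) {..<length a}) i = (f^^(a!i*m + ns i)) x"
proof -
  have "((prod_map f a)^^m) (restrict (\<lambda>i. (f^^(ns i)) x) {..<length a}) i
        = (f^^(a!i*m)) ((f^^(ns i)) x)"
    unfolding g_iter[OF i] using i by simp
  also have "\<dots> = (f^^(a!i*m + ns i)) x" by (simp only: funpow_add comp_apply)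
  finally show ?thesis .
qed

lemma D21:
  fixes X :: "'a::metric_space set"
  assumes X: "compact X" "continuous_on X f" "f ` X \<subseteq> X"
    and ad: "admissible_vec a"
    and x: "x \<in> Trans_F X f (Fs a)"
  shows "multi_minimal_wrt X f a"
proof -
  define r where "r = length a"
  define T where "T = prod_space X r"
  define g where "g = prod_map f a"
  have r1: "r \<ge> 1" using ad unfolding admissible_vec_def r_def by simp
  have xX: "x \<in> X" using x unfolding Trans_F_def by simp
  have FsU: "Fs a (hit_times f x U)" if "openin (top_of_set X) U" "U \<noteq> {}" for U
    using x that unfolding Trans_F_def by blast
  have cmg: "continuous_map T T g" unfolding T_def g_def r_def by (rule cm_g[OF X(2,3)])
  have regT: "regular_space T" unfolding T_def by (rule reg_T)
  define w where "w = (\<lambda>ns::nat\<Rightarrow>nat. restrict (\<lambda>i. (f^^(ns i)) x) {..<r})"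
  have wT: "w ns \<in> topspace T" for ns
    unfolding T_def topspace_T w_def by (simp add: fX[OF X(2,3) xX])
  have witer: "(g^^m) (w ns) i = (f^^(a!i*m + ns i)) x" if "i < r" for m ns i
    unfolding g_def w_def r_def by (rule w_iter[OF that[unfolded r_def]])
  have dense: "\<exists>n. (f^^n) x \<in> U" if "openin (top_of_set X) U" "U \<noteq> {}" for U
  proof -
    have "Fs a (hit_times f x U)" using FsU that .
    then obtain F' where F': "syndetic F'" "\<forall>i<length a. \<forall>m\<in>F'. a ! i * m + replicate r 0 ! i \<in> hit_times f x U"
      unfolding Fs_def r_def by (metis length_replicate)
    obtain m where "m \<in> F'" using synd_ne[OF F'(1)] by blast
    then have "a!0*m \<in> hit_times f x U" using F'(2) r1 unfolding r_def by (simp add: Suc_le_eq)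
    then show ?thesis unfolding hit_times_def by blast
  qed
  have ur: "\<exists>L. \<forall>k. \<exists>l\<le>L. (g^^(k+l)) (w ns) \<in> V" if V: "openin T V" "w ns \<in> V" for V ns
  proof -
    obtain U where U: "\<And>i. i < r \<Longrightarrow> openin (top_of_set X) (U i)" "w ns \<in> PiE {..<r} U" "PiE {..<r} U \<subseteq> V"
      using openin_T_box[OF V[unfolded T_def]] by blast
    define W where "W = (\<Inter>i\<in>{..<r}. {y \<in> topspace (top_of_set X). (f^^(ns i)) y \<in> U i})"
    have oW: "openin (top_of_set X) W" unfolding W_def
    proof (rule openin_INT2)
      have "0 \<in> {..<r}" using r1 by simp
      then show "{..<r} \<noteq> {}" by blast
      fix i assume "i \<in> {..<r}"
      then show "openin (top_of_set X) {y \<in> topspace (top_of_set X). (f ^^ ns i) y \<in> U i}"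
        by (intro openin_continuous_map_preimage[OF cm_funpow[OF cm_f[OF X(2,3)]]] U(1)) simp
    qed simp
    have "x \<in> W" unfolding W_def using U(2) xX unfolding w_def by (auto simp: PiE_iff)
    then have "W \<noteq> {}" by blast
    then have "Fs a (hit_times f x W)" using FsU oW by blast
    then obtain F' where F': "syndetic F'" "\<forall>i<length a. \<forall>m\<in>F'. a ! i * m + replicate r 0 ! i \<in> hit_times f x W"
      unfolding Fs_def r_def by (metis length_replicate)
    obtain N where N: "\<forall>n\<ge>1. \<exists>m\<in>F'. n \<le> m \<and> m \<le> n + N" using F'(1) unfolding syndetic_def by blast
    have inV: "(g^^m) (w ns) \<in> V" if m: "m \<in> F'" for m
    proof -
      have "(g^^m) (w ns) \<in> PiE {..<r} U"
      proof -
        have "(g^^m) (w ns) \<in> extensional {..<r}"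
          using funpow_in[OF cmg wT] unfolding T_def topspace_T by (simp add: PiE_iff)
        moreover have "(g^^m) (w ns) i \<in> U i" if i: "i < r" for i
        proof -
          have "(f^^(a!i*m)) x \<in> W" using F'(2) m i unfolding hit_times_def r_def by simp
          then have "(f^^(ns i)) ((f^^(a!i*m)) x) \<in> U i" unfolding W_def using i by blast
          moreover have "(f^^(ns i)) ((f^^(a!i*m)) x) = (f^^(a!i*m + ns i)) x"
            unfolding add.commute[of "a!i*m"] by (simp only: funpow_add comp_apply)
          ultimately show ?thesis using witer[OF i] by simp
        qed
        ultimately show ?thesis by (simp add: PiE_iff)
      qed
      then show ?thesis using U(3) by blast
    qed
    show ?thesis
    proof (rule exI[of _ "N+1"], rule allI)
      fix k
      obtain m where m: "m \<in> F'" "k + 1 \<le> m" "m \<le> k + 1 + N" using N by (meson le_add2)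
      have "(g^^(k + (m - k))) (w ns) \<in> V" using inV[OF m(1)] m(2) by simp
      moreover have "m - k \<le> N + 1" using m(3) by simp
      ultimately show "\<exists>l\<le>N+1. (g^^(k+l)) (w ns) \<in> V" by blast
    qed
  qed
  define z where "z = w (\<lambda>_. 0)"
  define Orb where "Orb = (\<lambda>y. {(g^^k) y | k. True})"
  have zcl: "z \<in> T closure_of Orb (w ns)" for ns
    unfolding in_closure_of
  proof (intro conjI allI impI)
    show "z \<in> topspace T" unfolding z_def by (rule wT)
    fix V assume V: "z \<in> V \<and> openin T V"
    obtain U where U: "\<And>i. i < r \<Longrightarrow> openin (top_of_set X) (U i)" "z \<in> PiE {..<r} U" "PiE {..<r} U \<subseteq> V"
      using openin_T_box[of X r V z] V unfolding T_def by blast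
    define W where "W = (\<Inter>i\<in>{..<r}. U i)"
    have oW: "openin (top_of_set X) W" unfolding W_def
    proof (rule openin_INT2)
      have "0 \<in> {..<r}" using r1 by simp
      then show "{..<r} \<noteq> {}" by blast
    qed (use U(1) in auto)
    have "x \<in> W" unfolding W_def using U(2) unfolding z_def w_def by (auto simp: PiE_iff)
    then have "W \<noteq> {}" by blast
    then have "Fs a (hit_times f x W)" using FsU oW by blast
    then obtain F' where F': "syndetic F'" "\<forall>i<length a. \<forall>m\<in>F'. a ! i * m + map ns [0..<r] ! i \<in> hit_times f x W"
      unfolding Fs_def r_def by (metis length_map length_upt minus_nat.diff_0)
    obtain m where m: "m \<in> F'" using synd_ne[OF F'(1)] by blast
    have "(g^^m) (w ns) \<in> PiE {..<r} U"
    proof -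
      have "(g^^m) (w ns) \<in> extensional {..<r}"
        using funpow_in[OF cmg wT] unfolding T_def topspace_T by (simp add: PiE_iff)
      moreover have "(g^^m) (w ns) i \<in> U i" if i: "i < r" for i
      proof -
        have "a ! i * m + map ns [0..<r] ! i \<in> hit_times f x W" using F'(2) m i unfolding r_def by blast
        then have "(f^^(a!i*m + ns i)) x \<in> W" using i unfolding hit_times_def by simp
        then show ?thesis using witer[OF i] i unfolding W_def by simp
      qed
      ultimately show ?thesis by (simp add: PiE_iff)
    qed
    then show "\<exists>y. y \<in> Orb (w ns) \<and> y \<in> V" using U(3) unfolding Orb_def by blast
  qed
  define M where "M = T closure_of Orb z"
  have orbT: "Orb y \<subseteq> topspace T" if "y \<in> topspace T" for y
    unfolding Orb_def using funpow_in[OF cmg that] by blast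
  have Minv: "g ` M \<subseteq> M" unfolding M_def Orb_def by (rule orbit_closure_inv[OF cmg]) simp
  have Mcl: "closedin T M" unfolding M_def by simp
  have zM: "z \<in> M"
  proof -
    have "z \<in> Orb z" unfolding Orb_def by (metis (mono_tags) funpow_0 mem_Collect_eq)
    then show ?thesis unfolding M_def using closure_of_subset[OF orbT[OF wT[of "\<lambda>_. 0"]]] unfolding z_def by blast
  qed
  have wM: "w ns \<in> M" for ns
    using UR[OF regT cmg ur zcl[unfolded Orb_def] Mcl Minv zM wT] by blast
  have Mtop: "M = topspace T"
  proof
    show "M \<subseteq> topspace T" unfolding M_def by (rule closure_of_subset_topspace)
    show "topspace T \<subseteq> M"
    proof
      fix p assume p: "p \<in> topspace T"
      have "p \<in> T closure_of M" unfolding in_closure_of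
      proof (intro conjI allI impI)
        show "p \<in> topspace T" by (rule p)
        fix V assume V: "p \<in> V \<and> openin T V"
        obtain U where U: "\<And>i. i < r \<Longrightarrow> openin (top_of_set X) (U i)" "p \<in> PiE {..<r} U" "PiE {..<r} U \<subseteq> V"
          using openin_T_box[of X r V p] V unfolding T_def by blast
        have "\<forall>i. \<exists>n. i < r \<longrightarrow> (f^^n) x \<in> U i"
        proof (intro allI)
          fix i show "\<exists>n. i < r \<longrightarrow> (f^^n) x \<in> U i"
          proof (cases "i < r")
            case True
            have "U i \<noteq> {}" using U(2) True by (auto simp: PiE_iff)
            then show ?thesis using dense[OF U(1)[OF True]] by blast
          qed simp
        qed
        then obtain ns where ns: "\<And>i. i < r \<Longrightarrow> (f^^(ns i)) x \<in> U i" by metis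
        have "w ns \<in> PiE {..<r} U" unfolding w_def using ns by (simp add: PiE_iff)
        then show "\<exists>y. y \<in> M \<and> y \<in> V" using wM U(3) by blast
      qed
      then show "p \<in> M" using closure_of_closedin[OF Mcl] by simp
    qed
  qed
  have "minimal_sys T g" unfolding minimal_sys_def
  proof (intro conjI allI impI)
    show "g ` topspace T \<subseteq> topspace T" using cmg by (simp add: continuous_map_image_subset_topspace)
    fix A assume A: "closedin T A \<and> A \<noteq> {} \<and> g ` A \<subseteq> A"
    then obtain q where q: "q \<in> A" by blast
    have "q \<in> topspace T" using A q closedin_subset by blast
    then have "q \<in> T closure_of Orb z" using Mtop unfolding M_def by simp
    then have "z \<in> A" using UR[OF regT cmg ur, of "\<lambda>_. 0" q A] A q wT unfolding Orb_def z_def by blast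
    then have "Orb z \<subseteq> A" unfolding Orb_def using funpow_inv[of g A] A by blast
    then have "M \<subseteq> A" unfolding M_def using A by (simp add: closure_of_minimal)
    then show "A = topspace T" using Mtop A closedin_subset by blast
  qed
  then show ?thesis unfolding multi_minimal_wrt_def T_def g_def r_def .
qed


lemma equiv_a:
  fixes X :: "'a::metric_space set" and f :: "'a \<Rightarrow> 'a"
  assumes X: "compact X" "X \<noteq> {}" "continuous_on X f" "f ` X \<subseteq> X"
    and ad: "admissible_vec a"
  shows "(multi_minimal_wrt X f a \<longleftrightarrow> Trans_F X f (Fs a) \<noteq> {}) \<and>
         (Trans_F X f (Fs a) \<noteq> {} \<longleftrightarrow> Trans_F X f (Fs a) = X)"
proof -
  have 13: "Trans_F X f (Fs a) = X" if "multi_minimal_wrt X f a"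
    unfolding Trans_F_def using D13[OF X(1,3,4) ad that] by blast
  have 21: "multi_minimal_wrt X f a" if "Trans_F X f (Fs a) \<noteq> {}"
    using D21[OF X(1,3,4) ad] that by blast
  show ?thesis using 13 21 X(2) by blast
qed

lemma adm_upt: "i \<ge> 1 \<Longrightarrow> admissible_vec [1..<i+1]"
  unfolding admissible_vec_def by (simp del: upt_Suc add: nth_upt)

theorem theorem6p4:
  fixes X :: "'a::metric_space set" and f :: "'a \<Rightarrow> 'a"
  assumes "compact X" and "X \<noteq> {}" and "continuous_on X f" and "f ` X \<subseteq> X"
  shows "(\<forall>a. admissible_vec a \<longrightarrow>
            (multi_minimal_wrt X f a \<longleftrightarrow> Trans_F X f (Fs a) \<noteq> {}) \<and>
            (Trans_F X f (Fs a) \<noteq> {} \<longleftrightarrow> Trans_F X f (Fs a) = X)) \<and>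
         (multi_minimal X f \<longleftrightarrow> Trans_F X f Fs_inf \<noteq> {}) \<and>
         (Trans_F X f Fs_inf \<noteq> {} \<longleftrightarrow> Trans_F X f Fs_inf = X)"
proof -
  have E: "\<And>a. admissible_vec a \<Longrightarrow> (multi_minimal_wrt X f a \<longleftrightarrow> Trans_F X f (Fs a) \<noteq> {}) \<and>
            (Trans_F X f (Fs a) \<noteq> {} \<longleftrightarrow> Trans_F X f (Fs a) = X)"
    using equiv_a[OF assms] by blast
  have inf: "Trans_F X f Fs_inf = (\<Inter>i\<in>{1..}. Trans_F X f (Fs [1..<i+1])) \<inter> X"
    unfolding Trans_F_def Fs_inf_def by auto
  have tX: "Trans_F X f (Fs [1..<i+1]) \<subseteq> X" for i unfolding Trans_F_def by blast
  have A: "multi_minimal X f \<longleftrightarrow> Trans_F X f Fs_inf = X"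
  proof
    assume mm: "multi_minimal X f"
    have "Trans_F X f (Fs [1..<i+1]) = X" if "i \<ge> 1" for i
      using E[OF adm_upt[OF that]] mm that unfolding multi_minimal_def by blast
    then show "Trans_F X f Fs_inf = X" unfolding inf by auto
  next
    assume t: "Trans_F X f Fs_inf = X"
    have "multi_minimal_wrt X f [1..<i+1]" if "i \<ge> 1" for i
    proof -
      have "Trans_F X f (Fs [1..<i+1]) \<noteq> {}" using t assms(2) that unfolding inf by auto
      then show ?thesis using E[OF adm_upt[OF that]] by blast
    qed
    then show "multi_minimal X f" unfolding multi_minimal_def by blast
  qed
  have B: "Trans_F X f Fs_inf \<noteq> {} \<longleftrightarrow> Trans_F X f Fs_inf = X"
  proof
    assume ne: "Trans_F X f Fs_inf \<noteq> {}"
    have "Trans_F X f (Fs [1..<i+1]) = X" if "i \<ge> 1" for i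
    proof -
      have "Trans_F X f (Fs [1..<i+1]) \<noteq> {}" using ne that unfolding inf by auto
      then show ?thesis using E[OF adm_upt[OF that]] by blast
    qed
    then show "Trans_F X f Fs_inf = X" unfolding inf by auto
  next
    assume "Trans_F X f Fs_inf = X" then show "Trans_F X f Fs_inf \<noteq> {}" using assms(2) by simp
  qed
  show ?thesis using E A B by blast
qed

end
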